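(* Let $\mathfrak g$ be of type $G_2$ and $\lambda,\mu\in P^+$ with $n_2=\mu(h_2)=0$. Then there exists a bijection $\mathcal S^{G}_{\lambda,\mu}\to\mathcal T^{G}_{\lambda,\mu}$.
   Context: $\alpha_1$ is the short simple root; $m_i=\lambda(h_i)$, $n_1=\mu(h_1)$ are non-negative integers, $n_2=0$. $\mathcal S^{G}_{\lambda,\mu}=\{(a,b,c,d,e,f)\in\mathbb Z_+^6: a\le\min\{m_1,n_1\},\ b\le m_2+n_2,\ f\le\min\{m_2,n_2\},\ b+e-a\le m_2+n_2,\ a+c+d\le\min\{m_1+m_2,n_1+n_2\},\ a+b+c\le\min\{m_1+m_2,n_1+n_2\},\ a+b+c+d\le\min\{m_1+2m_2,n_1+2n_2\},\ b+c+d+e\le\min\{m_1+2m_2,n_1+2n_2\},\ 2(a+c)+3d-b\le m_1+n_1,\ 2(a+c)+b+d\le m_1+n_1\}$. $\mathcal T^{G}_{\lambda,\mu}=\{(a,b,c,d,e,f)\in\mathbb Z_+^6: a+b+c+d+e+f\le n_1,\ c\le1,\ b+e-d\le m_2,\ f\le m_1,\ e\le m_2,\ a-2b+2d-e+f\le m_1,\ c+f+2d-e\le m_1\}$. *)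

theory Defs
  imports Main
begin

text \<open>Tuples (a,b,c,d,e,f) of non-negative integers. Parameters:
  m1 = lambda(h_1), m2 = lambda(h_2), n1 = mu(h_1), n2 = mu(h_2).\<close>

definition S_G :: "nat \<Rightarrow> nat \<Rightarrow> nat \<Rightarrow> nat \<Rightarrow> (int \<times> int \<times> int \<times> int \<times> int \<times> int) set" where
  "S_G m1 m2 n1 n2 = {(a,b,c,d,e,f).
     0 \<le> a \<and> 0 \<le> b \<and> 0 \<le> c \<and> 0 \<le> d \<and> 0 \<le> e \<and> 0 \<le> f \<and>
     a \<le> min (int m1) (int n1) \<and>
     b \<le> int m2 + int n2 \<and>
     f \<le> min (int m2) (int n2) \<and>
     b + e - a \<le> int m2 + int n2 \<and>
     a + c + d \<le> min (int m1 + int m2) (int n1 + int n2) \<and>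
     a + b + c \<le> min (int m1 + int m2) (int n1 + int n2) \<and>
     a + b + c + d \<le> min (int m1 + 2 * int m2) (int n1 + 2 * int n2) \<and>
     b + c + d + e \<le> min (int m1 + 2 * int m2) (int n1 + 2 * int n2) \<and>
     2 * (a + c) + 3 * d - b \<le> int m1 + int n1 \<and>
     2 * (a + c) + b + d \<le> int m1 + int n1}"

definition T_G :: "nat \<Rightarrow> nat \<Rightarrow> nat \<Rightarrow> (int \<times> int \<times> int \<times> int \<times> int \<times> int) set" where
  "T_G m1 m2 n1 = {(a,b,c,d,e,f).
     0 \<le> a \<and> 0 \<le> b \<and> 0 \<le> c \<and> 0 \<le> d \<and> 0 \<le> e \<and> 0 \<le> f \<and>
     a + b + c + d + e + f \<le> int n1 \<and>
     c \<le> 1 \<and>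
     b + e - d \<le> int m2 \<and>
     f \<le> int m1 \<and>
     e \<le> int m2 \<and>
     a - 2 * b + 2 * d - e + f \<le> int m1 \<and>
     c + f + 2 * d - e \<le> int m1}"

end

theory Submission
  imports Defs
begin

declare [[smt_timeout = 600]]

definition phi :: "int \<Rightarrow> int \<times> int \<times> int \<times> int \<times> int \<times> int \<Rightarrow> int \<times> int \<times> int \<times> int \<times> int \<times> int" where
  "phi m = (\<lambda>(a,b,c,d,e,f).
     let k = min b d; b1 = b - k; d1 = d - k; p = min a e; a1 = a - p; e1 = e - p;
         U = c + d1; beta = m + e1 - p - a1; q = min U beta; L = U - q;
         cv = min (min (beta - q) d1) q; r = q - cv
     in (a1 + d1 + k + L - cv, b1 + L + r div 2, r mod 2, cv + r div 2, e1 + k, p))"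

definition psi :: "int \<Rightarrow> int \<times> int \<times> int \<times> int \<times> int \<times> int \<Rightarrow> int \<times> int \<times> int \<times> int \<times> int \<times> int" where
  "psi m = (\<lambda>(A,B,C,D,E,F).
     let k0 = min A E; a10 = A - k0; e10 = E - k0;
         sig = m + e10 - F - a10 - (C + 2*D)
     in if sig > 0 then
          (a10 + F, max (B - D) 0 + k0, 2*(D - max (D - B) 0) + C, max (D - B) 0 + k0, e10 + F, 0)
        else
          (let Dl = m - F - (C + 2*D); a1 = max Dl 0; e1 = max (-Dl) 0; k = E - e1;
               x = min (B - D) (A - a1 - k); b1 = B - D - x; d1 = A - a1 - k - x;
               c = C + 2*D + x - d1
           in (a1 + F, b1 + k, c, d1 + k, e1 + F, 0)))"

lemma phi_ok:
  fixes a b c d e f :: int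
  assumes "(a,b,c,d,e,f) \<in> S_G m1 m2 n1 0"
  shows "phi (int m1) (a,b,c,d,e,f) \<in> T_G m1 m2 n1 \<and> psi (int m1) (phi (int m1) (a,b,c,d,e,f)) = (a,b,c,d,e,f)"
proof -
  define M1 where "M1 = int m1"
  define M2 where "M2 = int m2"
  define N1 where "N1 = int n1"
  have h: "0 \<le> a" "0 \<le> b" "0 \<le> c" "0 \<le> d" "0 \<le> e" "f = 0"
     "a \<le> M1" "a \<le> N1" "b \<le> M2" "b + e - a \<le> M2"
     "a + c + d \<le> M1 + M2" "a + c + d \<le> N1"
     "a + b + c \<le> M1 + M2" "a + b + c \<le> N1"
     "a + b + c + d \<le> M1 + 2*M2" "a + b + c + d \<le> N1"
     "b + c + d + e \<le> M1 + 2*M2" "b + c + d + e \<le> N1"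
     "2 * (a + c) + 3 * d - b \<le> M1 + N1" "2 * (a + c) + b + d \<le> M1 + N1"
    using assms by (auto simp: S_G_def M1_def M2_def N1_def)
  define k where "k = min b d"
  define p where "p = min a e"
  define U where "U = c + (d - k)"
  define beta where "beta = M1 + (e - p) - p - (a - p)"
  define q where "q = min U beta"
  define cv where "cv = min (min (beta - q) (d - k)) q"
  define r where "r = q - cv"
  define hh where "hh = r div 2"
  define rr where "rr = r mod 2"
  have rdec: "r = 2 * hh + rr" "0 \<le> rr" "rr \<le> 1" unfolding hh_def rr_def by auto
  have phi_eq: "phi M1 (a,b,c,d,e,f) = ((a - p) + (d - k) + k + (U - q) - cv, (b - k) + (U - q) + hh, rr, cv + hh, (e - p) + k, p)"
    unfolding phi_def Let_def k_def p_def U_def beta_def q_def cv_def r_def hh_def rr_def by simp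
  have mins: "k \<le> b" "k \<le> d" "k = b \<or> k = d" "p \<le> a" "p \<le> e" "p = a \<or> p = e"
    "q \<le> U" "q \<le> beta" "q = U \<or> q = beta"
    "cv \<le> beta - q" "cv \<le> d - k" "cv \<le> q" "cv = beta - q \<or> cv = d - k \<or> cv = q"
    unfolding k_def p_def q_def cv_def by (auto simp: min_def)
  have T1: "phi M1 (a,b,c,d,e,f) \<in> T_G m1 m2 n1"
    unfolding phi_eq T_G_def M1_def[symmetric] M2_def[symmetric] N1_def[symmetric]
    apply (simp only: mem_Collect_eq case_prod_conv)
    using h mins rdec U_def beta_def r_def
    by smt
  have P1: "psi M1 (phi M1 (a,b,c,d,e,f)) = (a,b,c,d,e,f)"
    unfolding phi_eq psi_def Let_def
    apply (simp only: case_prod_conv)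
    apply (split if_split)
    apply (intro conjI impI)
    apply (simp only: prod.inject)
    using h mins rdec U_def beta_def r_def
    apply (smt (z3) min_def max_def)
    apply (simp only: prod.inject)
    using h mins rdec U_def beta_def r_def
    apply (smt (z3) min_def max_def)
    done
  show ?thesis
    using T1 P1 unfolding M1_def by simp
qed

lemma phi_val:
  fixes a b c d e f m k p beta q cv hh rr :: int
  assumes "k = min b d" "p = min a e" "beta = m + (e-p) - p - (a-p)"
    "q = min (c + (d-k)) beta" "cv = min (min (beta-q) (d-k)) q"
    "q - cv = 2*hh + rr" "0 \<le> rr" "rr \<le> 1"
  shows "phi m (a,b,c,d,e,f) = ((a-p)+(d-k)+k+(c+(d-k)-q)-cv, (b-k)+(c+(d-k)-q)+hh, rr, cv+hh, (e-p)+k, p)"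
proof -
  have "rr div 2 = 0" "rr mod 2 = rr" using assms(7,8) by simp_all
  then have "(q - cv) div 2 = hh" "(q - cv) mod 2 = rr" unfolding assms(6) by simp_all
  then show ?thesis unfolding phi_def Let_def prod.case assms(1)[symmetric] assms(2)[symmetric]
    assms(3)[symmetric] assms(4)[symmetric] assms(5)[symmetric] by simp
qed

lemma psi_ok:
  fixes A B C D E F :: int
  assumes "(A,B,C,D,E,F) \<in> T_G m1 m2 n1"
  shows "psi (int m1) (A,B,C,D,E,F) \<in> S_G m1 m2 n1 0 \<and> phi (int m1) (psi (int m1) (A,B,C,D,E,F)) = (A,B,C,D,E,F)"
proof -
  define M1 where "M1 = int m1"
  define M2 where "M2 = int m2"
  define N1 where "N1 = int n1"
  have h: "0 \<le> A" "0 \<le> B" "0 \<le> C" "0 \<le> D" "0 \<le> E" "0 \<le> F"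
     "A + B + C + D + E + F \<le> N1" "C \<le> 1" "B + E - D \<le> M2" "F \<le> M1" "E \<le> M2"
     "A - 2 * B + 2 * D - E + F \<le> M1" "C + F + 2 * D - E \<le> M1"
    using assms by (auto simp: T_G_def M1_def M2_def N1_def)
  define k0 where "k0 = min A E"
  define a10 where "a10 = A - k0"
  define e10 where "e10 = E - k0"
  define sig where "sig = M1 + e10 - F - a10 - (C + 2*D)"
  have "psi M1 (A,B,C,D,E,F) \<in> S_G m1 m2 n1 0 \<and> phi M1 (psi M1 (A,B,C,D,E,F)) = (A,B,C,D,E,F)"
  proof (cases "sig > 0")
    case True
    define d1 where "d1 = max (D - B) 0"
    define b1 where "b1 = max (B - D) 0"
    define c where "c = 2*(D - d1) + C"
    have ps: "psi M1 (A,B,C,D,E,F) = (a10 + F, b1 + k0, c, d1 + k0, e10 + F, 0)"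
      unfolding psi_def Let_def using True
      by (simp add: k0_def a10_def e10_def sig_def d1_def b1_def c_def)
    have mm: "k0 \<le> A" "k0 \<le> E" "k0 = A \<or> k0 = E" "d1 \<ge> 0" "d1 \<ge> D - B" "d1 = 0 \<or> d1 = D - B"
      "b1 \<ge> 0" "b1 \<ge> B - D" "b1 = 0 \<or> b1 = B - D"
      unfolding k0_def d1_def b1_def by auto
    have S1: "(a10 + F, b1 + k0, c, d1 + k0, e10 + F, 0) \<in> S_G m1 m2 n1 0"
      unfolding S_G_def M1_def[symmetric] M2_def[symmetric] N1_def[symmetric]
      apply (simp only: mem_Collect_eq case_prod_conv of_nat_0 min.bounded_iff)
      using h mm True a10_def e10_def sig_def c_def by (smt (z3))
    have P1: "phi M1 (a10 + F, b1 + k0, c, d1 + k0, e10 + F, 0) = (A,B,C,D,E,F)"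
    proof -
      define beta where "beta = M1 + (e10 + F - F) - F - (a10 + F - F)"
      have p1: "k0 = min (b1 + k0) (d1 + k0)" using mm unfolding min_def by (smt (z3))
      have p2: "F = min (a10 + F) (e10 + F)" using mm a10_def e10_def unfolding min_def by (smt (z3))
      have p4: "c + d1 = min (c + (d1 + k0 - k0)) beta"
        using h mm True a10_def e10_def sig_def c_def beta_def unfolding min_def by (smt (z3))
      have p5: "d1 = min (min (beta - (c + d1)) (d1 + k0 - k0)) (c + d1)"
        using h mm True a10_def e10_def sig_def c_def beta_def unfolding min_def by (smt (z3))
      have p6: "c + d1 - d1 = 2 * (D - d1) + C" using c_def by simp
      have v: "phi M1 (a10 + F, b1 + k0, c, d1 + k0, e10 + F, 0) =
        ((a10 + F - F)+(d1 + k0-k0)+k0+(c+(d1 + k0-k0)-(c+d1))-d1, (b1 + k0-k0)+(c+(d1 + k0-k0)-(c+d1))+(D-d1), C, d1+(D-d1), (e10 + F-F)+k0, F)"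
        by (rule phi_val[OF p1 p2 beta_def p4 p5 p6 h(3) h(8)])
      show ?thesis unfolding v using mm a10_def e10_def b1_def d1_def unfolding max_def by (smt (z3))
    qed
    show ?thesis using ps S1 P1 by simp
  next
    case False
    define Dl where "Dl = M1 - F - (C + 2*D)"
    define a1 where "a1 = max Dl 0"
    define e1 where "e1 = max (-Dl) 0"
    define k where "k = E - e1"
    define x where "x = min (B - D) (A - a1 - k)"
    define b1 where "b1 = B - D - x"
    define d1 where "d1 = A - a1 - k - x"
    define c where "c = C + 2*D + x - d1"
    have ps: "psi M1 (A,B,C,D,E,F) = (a1 + F, b1 + k, c, d1 + k, e1 + F, 0)"
      unfolding psi_def Let_def using False
      by (simp add: k0_def a10_def e10_def sig_def Dl_def a1_def e1_def k_def x_def b1_def d1_def c_def)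
    have mm: "k0 \<le> A" "k0 \<le> E" "k0 = A \<or> k0 = E" "a1 \<ge> 0" "a1 \<ge> Dl" "a1 = 0 \<or> a1 = Dl"
      "e1 \<ge> 0" "e1 \<ge> -Dl" "e1 = 0 \<or> e1 = -Dl"
      "x \<le> B - D" "x \<le> A - a1 - k" "x = B - D \<or> x = A - a1 - k"
      unfolding k0_def a1_def e1_def x_def by auto
    have S1: "(a1 + F, b1 + k, c, d1 + k, e1 + F, 0) \<in> S_G m1 m2 n1 0"
      unfolding S_G_def M1_def[symmetric] M2_def[symmetric] N1_def[symmetric]
      apply (simp only: mem_Collect_eq case_prod_conv of_nat_0 min.bounded_iff)
      using h mm False a10_def e10_def sig_def Dl_def k_def b1_def d1_def c_def by (smt (z3))
    have P1: "phi M1 (a1 + F, b1 + k, c, d1 + k, e1 + F, 0) = (A,B,C,D,E,F)"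
    proof -
      define beta where "beta = M1 + (e1 + F - F) - F - (a1 + F - F)"
      have bC: "beta = C + 2*D" using beta_def Dl_def mm by (smt (z3))
      have p1: "k = min (b1 + k) (d1 + k)" using mm b1_def d1_def unfolding min_def by (smt (z3))
      have p2: "F = min (a1 + F) (e1 + F)" using mm unfolding min_def by (smt (z3))
      have Ak: "A - a1 - k \<ge> 0" using h mm False a10_def e10_def sig_def Dl_def k_def by (smt (z3))
      have p4: "C + 2*D + min x 0 = min (c + (d1 + k - k)) beta"
        using bC c_def unfolding min_def by (smt (z3))
      have p5: "max (-x) 0 = min (min (beta - (C + 2*D + min x 0)) (d1 + k - k)) (C + 2*D + min x 0)"
        using h mm bC d1_def Ak unfolding min_def max_def by (smt (z3))
      have p6: "C + 2*D + min x 0 - max (-x) 0 = 2 * (D + min x 0) + C" unfolding min_def max_def by (smt (z3))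
      have v: "phi M1 (a1 + F, b1 + k, c, d1 + k, e1 + F, 0) =
        ((a1 + F - F)+(d1 + k-k)+k+(c+(d1 + k-k)-(C + 2*D + min x 0))-max (-x) 0,
         (b1 + k-k)+(c+(d1 + k-k)-(C + 2*D + min x 0))+(D + min x 0), C, max (-x) 0+(D + min x 0), (e1 + F-F)+k, F)"
        by (rule phi_val[OF p1 p2 beta_def p4 p5 p6 h(3) h(8)])
      have mx: "min x 0 + max (-x) 0 = 0" by (simp add: min_def max_def)
      show ?thesis unfolding v prod.inject using mx b1_def d1_def c_def k_def by (intro conjI; linarith)
    qed
    show ?thesis using ps S1 P1 by simp
  qed
  then show ?thesis unfolding M1_def by simp
qed

theorem lemma6p6:
  fixes m1 m2 n1 n2 :: nat
  assumes "n2 = 0"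
  shows "\<exists>g. bij_betw g (S_G m1 m2 n1 n2) (T_G m1 m2 n1)"
proof -
  have "bij_betw (phi (int m1)) (S_G m1 m2 n1 0) (T_G m1 m2 n1)"
  proof (rule bij_betw_byWitness[where f'="psi (int m1)"])
    show "\<forall>x\<in>S_G m1 m2 n1 0. psi (int m1) (phi (int m1) x) = x"
      using phi_ok by (metis prod_cases6)
    show "\<forall>y\<in>T_G m1 m2 n1. phi (int m1) (psi (int m1) y) = y"
      using psi_ok by (metis prod_cases6)
    show "phi (int m1) ` S_G m1 m2 n1 0 \<subseteq> T_G m1 m2 n1"
      using phi_ok by (metis image_subsetI prod_cases6)
    show "psi (int m1) ` T_G m1 m2 n1 \<subseteq> S_G m1 m2 n1 0"
      using psi_ok by (metis image_subsetI prod_cases6)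
  qed
  then show ?thesis using assms by blast
qed

end
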